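(* Let $f\colon\mathbb Z^m\to\mathbb Q\cup\{\infty\}$ be SBO jump M-convex and let $r\in\mathbb Z^m$. Let $z^{(1)},\dots,z^{(\ell)}\in\mathbb Z^m$ with $z^{(k)}\equiv r\pmod2$ for all $k$. Let $\lambda^{(1)},\dots,\lambda^{(\ell)}\ge0$ be reals with $\sum_k\lambda^{(k)}=1$, and suppose $z:=\sum_k\lambda^{(k)}z^{(k)}$ is an integer vector with $z\equiv r\pmod2$. Then \[ f(z)\le\sum_{k\in[\ell]}\lambda^{(k)}f(z^{(k)}). \]
   Context: For $x,y\in\mathbb Z^m$, write $x\sqsubseteq y$ if $|x_i|\le|y_i|$ and $x_iy_i\ge0$ for all $i$. A $2$-step decomposition of $d\in\mathbb Z^m$ is a multiset $p^{(1)},\dots,p^{(\ell)}\in\mathbb Z^m$ with $\|p^{(k)}\|_1=2$ and $p^{(k)}\sqsubseteq d$ for all $k$, and $d=\sum_kp^{(k)}$. $f$ is SBO jump M-convex if the following holds for all $z^{(1)},z^{(2)}$ with finite $f$-values. There must exist a $2$-step decomposition $p^{(1)},\dots,p^{(\ell)}$ of $z^{(2)}-z^{(1)}$ and reals $g^{(1)},\dots,g^{(\ell)}$ such that: - $f(z^{(2)})=f(z^{(1)})+\sum_kg^{(k)}$; - $f(z^{(1)}+\sum_{k\in I}p^{(k)})\le f(z^{(1)})+\sum_{k\in I}g^{(k)}$ for all $I\subseteq[\ell]$. Congruence modulo $2$ is componentwise. *)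

theory Defs
  imports Complex_Main "HOL-Library.Extended_Real" "HOL-Library.Function_Algebras"
begin

text \<open>Functions with values in Q \<union> {\<infinity>} are modelled as ereal-valued functions
  whose values are either +\<infinity> or rational.\<close>

definition conf_le :: "('m \<Rightarrow> int) \<Rightarrow> ('m \<Rightarrow> int) \<Rightarrow> bool" where
  "conf_le x y \<longleftrightarrow> (\<forall>i. \<bar>x i\<bar> \<le> \<bar>y i\<bar> \<and> x i * y i \<ge> 0)"

definition norm1 :: "('m::finite \<Rightarrow> int) \<Rightarrow> int" where
  "norm1 x = (\<Sum>i\<in>UNIV. \<bar>x i\<bar>)"

definition two_step_decomp :: "('m::finite \<Rightarrow> int) list \<Rightarrow> ('m \<Rightarrow> int) \<Rightarrow> bool" where
  "two_step_decomp ps d \<longleftrightarrow>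
     (\<forall>p\<in>set ps. norm1 p = 2 \<and> conf_le p d) \<and> sum_list ps = d"

definition rat_or_inf :: "(('m \<Rightarrow> int) \<Rightarrow> ereal) \<Rightarrow> bool" where
  "rat_or_inf f \<longleftrightarrow> (\<forall>x. f x = \<infinity> \<or> (\<exists>q::rat. f x = ereal (of_rat q)))"

definition SBO_jump_M_convex :: "(('m::finite \<Rightarrow> int) \<Rightarrow> ereal) \<Rightarrow> bool" where
  "SBO_jump_M_convex f \<longleftrightarrow>
    (\<forall>z1 z2. f z1 < \<infinity> \<and> f z2 < \<infinity> \<longrightarrow>
      (\<exists>ps gs. two_step_decomp ps (z2 - z1) \<and> length gs = length ps \<and>
         f z2 = f z1 + ereal (sum_list gs) \<and>
         (\<forall>I\<subseteq>{..<length ps}.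
            f (z1 + (\<Sum>k\<in>I. ps ! k)) \<le> f z1 + ereal (\<Sum>k\<in>I. gs ! k))))"

end

theory Submission
  imports Defs "HOL-Library.Multiset" "HOL-Library.Product_Lexorder"
begin

lemma sub_add_mset: "A \<subseteq># R \<Longrightarrow> A \<subseteq># add_mset x R"
  using subset_mset.order_trans by fastforce

lemma sub_add_mset_notin: "A \<subseteq># add_mset x R \<Longrightarrow> x \<notin># A \<Longrightarrow> A \<subseteq># R"
  by (metis Diff_eq_empty_iff_mset minus_add_mset_if_not_in_lhs)

lemma three_odd:
  assumes "\<forall>a b c. a\<noteq>b \<and> a\<noteq>c \<and> b\<noteq>c \<longrightarrow> \<not>(odd (q a) \<and> odd (q b) \<and> odd (q c))"
    "a\<noteq>b" "a\<noteq>c" "b\<noteq>c" "odd (q a)" "odd (q b)"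
  shows "even ((q::'m \<Rightarrow> int) c)"
  using assms by blast

lemma ball_sub: "\<forall>x\<in>#Q. P x \<Longrightarrow> Q = add_mset q Q' \<Longrightarrow> \<forall>x\<in>#Q'. P x"
  by simp

lemma odd_other:
  fixes q :: "'m::finite \<Rightarrow> int"
  assumes "even (\<Sum>j\<in>UNIV. q j)" "odd (q i)"
  shows "\<exists>a. a \<noteq> i \<and> odd (q a)"
proof (rule ccontr)
  assume "\<not> ?thesis"
  hence "even (\<Sum>j\<in>UNIV - {i}. q j)" by (intro dvd_sum) blast
  moreover have "(\<Sum>j\<in>UNIV. q j) = q i + (\<Sum>j\<in>UNIV - {i}. q j)"
    by (rule sum.remove) auto
  ultimately show False using assms by (metis even_add)
qed

lemma odd_sum_mset_ex:
  fixes Q :: "'a multiset"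
  assumes "odd (\<Sum>q\<in>#Q. g q :: int)"
  shows "\<exists>q\<in>#Q. odd (g q)"
  using assms
proof (induction Q)
  case empty then show ?case by simp
next
  case (add x Q) then show ?case by (cases "odd (g x)") auto
qed

lemma parity_lemma:
  fixes Q :: "('m::finite \<Rightarrow> int) multiset" and i :: 'm
  assumes "\<forall>q\<in>#Q. even (\<Sum>j\<in>UNIV. q j)"
  and "\<forall>q\<in>#Q. \<forall>a b c. a\<noteq>b \<and> a\<noteq>c \<and> b\<noteq>c \<longrightarrow> \<not>(odd (q a) \<and> odd (q b) \<and> odd (q c))"
  and "\<forall>q\<in>#Q. q i = 0 \<or> \<bar>q i\<bar> = 1 \<or> (\<bar>q i\<bar> = 2 \<and> (\<forall>j. even (q j)))"
  and "\<forall>j. even (\<Sum>q\<in>#Q. q j)"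
  and "\<exists>q\<in>#Q. q i \<noteq> 0"
  shows "\<exists>A. A \<subseteq># Q \<and> (\<forall>j. even (\<Sum>q\<in>#A. q j)) \<and> 0 < (\<Sum>q\<in>#A. \<bar>q i\<bar>) \<and> (\<Sum>q\<in>#A. \<bar>q i\<bar>) \<le> 2"
  using assms
proof (induction "size Q" arbitrary: Q rule: less_induct)
  case less
  note I1a = less.prems(1) and I1b = less.prems(2) and I2 = less.prems(3) and I4 = less.prems(4)
    and I5 = less.prems(5)
  show ?case
  proof (cases "\<exists>q\<in>#Q. q i \<noteq> 0 \<and> (\<forall>j. even (q j))")
    case True
    then obtain q where q: "q \<in># Q" "q i \<noteq> 0" "\<forall>j. even (q j)" by blast
    have "\<bar>q i\<bar> \<le> 2" using I2 q by fastforce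
    then show ?thesis using q by (intro exI[of _ "{#q#}"]) auto
  next
    case C1: False
    show ?thesis
    proof (cases "\<exists>q\<in>#Q. q i = 0 \<and> (\<forall>j. even (q j))")
      case True
      then obtain q where q: "q \<in># Q" "q i = 0" "\<forall>j. even (q j)" by blast
      define Q' where "Q' = Q - {#q#}"
      have QQ: "Q = add_mset q Q'" using q by (simp add: Q'_def)
      have h0: "size Q' < size Q" using QQ by simp
      have h4: "\<forall>j. even (\<Sum>q\<in>#Q'. q j)"
      proof
        fix j
        have "even (\<Sum>q\<in>#Q. q j)" using I4 by blast
        then show "even (\<Sum>q\<in>#Q'. q j)" using q(3) QQ by simp
      qed
      have h5: "\<exists>q\<in>#Q'. q i \<noteq> 0" using I5 QQ q(2) by auto
      obtain A where "A \<subseteq># Q'" "(\<forall>j. even (\<Sum>q\<in>#A. q j))" "0 < (\<Sum>q\<in>#A. \<bar>q i\<bar>)"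
        "(\<Sum>q\<in>#A. \<bar>q i\<bar>) \<le> 2"
        using less.hyps[OF h0 ball_sub[OF I1a QQ] ball_sub[OF I1b QQ] ball_sub[OF I2 QQ] h4 h5] by blast
      then show ?thesis using QQ sub_add_mset by metis
    next
      case C2: False
      obtain q0 where q0: "q0 \<in># Q" "q0 i \<noteq> 0" using I5 by blast
      have q0i: "\<bar>q0 i\<bar> = 1" using I2 q0 C1 by blast
      hence oq0i: "odd (q0 i)" by (cases "q0 i \<ge> 0") auto
      obtain a where a: "a \<noteq> i" "odd (q0 a)" using odd_other[of q0 i] oq0i I1a q0 by blast
      define Q0 where "Q0 = Q - {#q0#}"
      have QQ0: "Q = add_mset q0 Q0" using q0 by (simp add: Q0_def)
      have "even (\<Sum>q\<in>#Q. q a)" using I4 by blast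
      hence "odd (\<Sum>q\<in>#Q0. q a)" using a QQ0 by simp
      then obtain q1 where q1: "q1 \<in># Q0" "odd (q1 a)" using odd_sum_mset_ex by blast
      define R where "R = Q0 - {#q1#}"
      have QR: "Q = add_mset q0 (add_mset q1 R)" using q1 QQ0 by (simp add: R_def)
      have evq0: "even (q0 j)" if "j \<noteq> i" "j \<noteq> a" for j
        using three_odd[OF bspec[OF I1b q0(1)], of i a j] that a oq0i by auto
      show ?thesis
      proof (cases "q1 i = 0")
        case False
        have "\<bar>q1 i\<bar> = 1" using I2 q1 C1 False QQ0 by auto
        hence oq1i: "odd (q1 i)" by (cases "q1 i \<ge> 0") auto
        have evq1: "even (q1 j)" if "j \<noteq> i" "j \<noteq> a" for j
          using three_odd[OF bspec[OF I1b], of q1 i a j] q1 QQ0 that a oq1i by auto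
        have "\<forall>j. even (q0 j + q1 j)"
        proof
          fix j
          show "even (q0 j + q1 j)"
          proof (cases "j = i")
            case True then show ?thesis using oq0i oq1i by simp
          next
            case False
            then show ?thesis
            proof (cases "j = a")
              case True then show ?thesis using a q1 by simp
            next
              case False then show ?thesis using evq0 evq1 \<open>j \<noteq> i\<close> by simp
            qed
          qed
        qed
        then show ?thesis using q0i \<open>\<bar>q1 i\<bar> = 1\<close> QR
          by (intro exI[of _ "{#q0, q1#}"]) auto
      next
        case True
        obtain b where b: "b \<noteq> a" "odd (q1 b)" using odd_other[of q1 a] q1(2) I1a q1 QQ0 by auto
        have bi: "b \<noteq> i" using b True by auto
        have evq1: "even (q1 j)" if "j \<noteq> b" "j \<noteq> a" for j
          using three_odd[OF bspec[OF I1b], of q1 a b j] q1 QQ0 that b by auto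
        define q where "q = q0 + q1"
        define Q' where "Q' = add_mset q R"
        have "size Q' < size Q" using QR Q'_def by simp
        moreover have "\<forall>x\<in>#Q'. even (\<Sum>j\<in>UNIV. x j)"
        proof -
          have "even (\<Sum>j\<in>UNIV. q j)" using I1a QR by (simp add: q_def sum.distrib)
          then show ?thesis using I1a QR Q'_def by auto
        qed
        moreover have "\<forall>x\<in>#Q'. \<forall>a b c. a\<noteq>b \<and> a\<noteq>c \<and> b\<noteq>c \<longrightarrow> \<not>(odd (x a) \<and> odd (x b) \<and> odd (x c))"
        proof -
          have ev: "even (q j)" if "j \<noteq> i" "j \<noteq> b" for j
            using evq0 evq1 a b that q_def q1(2) by (cases "j = a") auto
          have "\<forall>a b c. a\<noteq>b \<and> a\<noteq>c \<and> b\<noteq>c \<longrightarrow> \<not>(odd (q a) \<and> odd (q b) \<and> odd (q c))"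
          proof (intro allI impI notI)
            fix x y w assume d: "x\<noteq>y \<and> x\<noteq>w \<and> y\<noteq>w" and o: "odd (q x) \<and> odd (q y) \<and> odd (q w)"
            have "x = i \<or> x = b" using ev o by blast
            moreover have "y = i \<or> y = b" using ev o by blast
            moreover have "w = i \<or> w = b" using ev o by blast
            ultimately show False using d by blast
          qed
          then show ?thesis using I1b QR Q'_def by auto
        qed
        moreover have "\<forall>x\<in>#Q'. x i = 0 \<or> \<bar>x i\<bar> = 1 \<or> (\<bar>x i\<bar> = 2 \<and> (\<forall>j. even (x j)))"
          using I2 QR Q'_def q0i True q_def by auto
        moreover have "\<forall>j. even (\<Sum>x\<in>#Q'. x j)"
          using I4 QR Q'_def q_def by (simp add: algebra_simps)
        moreover have "\<exists>x\<in>#Q'. x i \<noteq> 0" using Q'_def q_def True q0 by auto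
        ultimately obtain A where A: "A \<subseteq># Q'" "(\<forall>j. even (\<Sum>q\<in>#A. q j))" "0 < (\<Sum>q\<in>#A. \<bar>q i\<bar>)"
          "(\<Sum>q\<in>#A. \<bar>q i\<bar>) \<le> 2"
          using less.hyps[of Q'] by blast
        show ?thesis
        proof (cases "q \<in># A")
          case True
          define A0 where "A0 = A - {#q#}"
          have AA: "A = add_mset q A0" using True A0_def by simp
          have "A0 \<subseteq># R" using A(1) AA Q'_def by simp
          hence sub: "add_mset q0 (add_mset q1 A0) \<subseteq># Q" using QR by simp
          show ?thesis
            apply (rule exI[of _ "add_mset q0 (add_mset q1 A0)"])
            using sub A AA q_def \<open>q1 i = 0\<close> by (simp add: algebra_simps)
        next
          case False
          have "A \<subseteq># R" using A(1) False Q'_def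
            using sub_add_mset_notin by (metis q_def)
          hence "A \<subseteq># Q" using QR sub_add_mset by metis
          then show ?thesis using A by blast
        qed
      qed
    qed
  qed
qed

lemma sum_fun_apply: "(sum (g :: 'b \<Rightarrow> 'm \<Rightarrow> int) I) j = (\<Sum>k\<in>I. g k j)"
  by (induction I rule: infinite_finite_induct) auto

lemma sum_list_apply: "(sum_list (ps :: ('m \<Rightarrow> int) list)) j = (\<Sum>q\<in>#mset ps. q j)"
  by (induction ps) auto

lemma sub_mset_idx:
  assumes "finite S" "A \<subseteq># image_mset g (mset_set S)"
  shows "\<exists>I\<subseteq>S. A = image_mset g (mset_set I)"
  using assms
proof (induction S arbitrary: A rule: finite_induct)
  case empty then show ?case by simp
next
  case (insert x F)
  have eq: "image_mset g (mset_set (insert x F)) = add_mset (g x) (image_mset g (mset_set F))"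
    using insert.hyps by simp
  show ?case
  proof (cases "g x \<in># A")
    case True
    have "A - {#g x#} \<subseteq># image_mset g (mset_set F)"
      using insert.prems eq True by (metis add_mset_add_single subset_eq_diff_conv)
    then obtain I where I: "I \<subseteq> F" "A - {#g x#} = image_mset g (mset_set I)"
      using insert.IH by blast
    have "x \<notin> I" using I insert.hyps by blast
    moreover have "finite I" using I insert.hyps finite_subset by blast
    ultimately have "A = image_mset g (mset_set (insert x I))"
      using I True by (simp add: diff_single_eq_union)
    then show ?thesis using I by blast
  next
    case False
    have "A \<subseteq># image_mset g (mset_set F)"
      using insert.prems eq False by (metis Diff_eq_empty_iff_mset minus_add_mset_if_not_in_lhs)
    then show ?thesis using insert.IH by blast
  qed
qed

lemma mset_nth: "mset ps = image_mset (nth ps) (mset_set {..<length ps})"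
  by (metis map_nth mset_map mset_set_upto_eq_mset_upto)

lemma norm1_even_sum:
  fixes q :: "'m::finite \<Rightarrow> int"
  assumes "norm1 q = 2"
  shows "even (\<Sum>j\<in>UNIV. q j)"
proof -
  have "(\<Sum>j\<in>UNIV. \<bar>q j\<bar>) - (\<Sum>j\<in>UNIV. q j) = (\<Sum>j\<in>UNIV. \<bar>q j\<bar> - q j)"
    by (simp add: sum_subtractf)
  moreover have "even (\<Sum>j\<in>UNIV. \<bar>q j\<bar> - q j)"
  proof (rule dvd_sum)
    fix j show "even (\<bar>q j\<bar> - q j)" by (cases "q j \<ge> 0") auto
  qed
  moreover have "even (\<Sum>j\<in>UNIV. \<bar>q j\<bar>)" using assms by (simp add: norm1_def)
  ultimately show ?thesis by (metis dvd_diff_commute even_add diff_add_cancel)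
qed

lemma odd_abs_ge1: "odd (x::int) \<Longrightarrow> 1 \<le> \<bar>x\<bar>"
  by (cases "x = 0") (simp, arith)

lemma norm1_three:
  fixes q :: "'m::finite \<Rightarrow> int"
  assumes "norm1 q = 2"
  shows "\<forall>a b c. a\<noteq>b \<and> a\<noteq>c \<and> b\<noteq>c \<longrightarrow> \<not>(odd (q a) \<and> odd (q b) \<and> odd (q c))"
proof (intro allI impI notI)
  fix a b c assume d: "a\<noteq>b \<and> a\<noteq>c \<and> b\<noteq>c" and o: "odd (q a) \<and> odd (q b) \<and> odd (q c)"
  have "(\<Sum>j\<in>{a,b,c}. \<bar>q j\<bar>) \<le> (\<Sum>j\<in>UNIV. \<bar>q j\<bar>)"
    by (rule sum_mono2) auto
  moreover have "(\<Sum>j\<in>{a,b,c}. \<bar>q j\<bar>) = \<bar>q a\<bar> + \<bar>q b\<bar> + \<bar>q c\<bar>" using d by simp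
  moreover have "\<bar>q a\<bar> \<ge> 1" "\<bar>q b\<bar> \<ge> 1" "\<bar>q c\<bar> \<ge> 1" using o odd_abs_ge1 by auto
  ultimately show False using assms by (simp add: norm1_def)
qed

lemma norm1_coord:
  fixes q :: "'m::finite \<Rightarrow> int"
  assumes "norm1 q = 2"
  shows "q i = 0 \<or> \<bar>q i\<bar> = 1 \<or> (\<bar>q i\<bar> = 2 \<and> (\<forall>j. even (q j)))"
proof -
  have sp: "(\<Sum>j\<in>UNIV. \<bar>q j\<bar>) = \<bar>q i\<bar> + (\<Sum>j\<in>UNIV - {i}. \<bar>q j\<bar>)"
    by (rule sum.remove) auto
  have nn: "(\<Sum>j\<in>UNIV - {i}. \<bar>q j\<bar>) \<ge> 0" by (rule sum_nonneg) auto
  have le: "\<bar>q i\<bar> \<le> 2" using sp nn assms unfolding norm1_def by linarith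
  show ?thesis
  proof (cases "\<bar>q i\<bar> = 2")
    case True
    hence z: "(\<Sum>j\<in>UNIV - {i}. \<bar>q j\<bar>) = 0" using sp assms by (simp add: norm1_def)
    have "\<forall>j\<in>UNIV - {i}. \<bar>q j\<bar> = 0"
      using sum_nonneg_eq_0_iff[of "UNIV - {i}" "\<lambda>j. \<bar>q j\<bar>"] z by simp
    have "\<forall>j. even (q j)"
    proof
      fix j show "even (q j)"
      proof (cases "j = i")
        case True
        have "q i = 2 \<or> q i = -2" using \<open>\<bar>q i\<bar> = 2\<close> by arith
        then show ?thesis using True by auto
      next
        case False then show ?thesis using \<open>\<forall>j\<in>UNIV - {i}. \<bar>q j\<bar> = 0\<close> by auto
      qed
    qed
    then show ?thesis using True by simp
  next
    case False
    then show ?thesis using le by auto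
  qed
qed

lemma exch_pair:
  fixes f :: "('m::finite \<Rightarrow> int) \<Rightarrow> ereal" and x1 x2 z r :: "'m \<Rightarrow> int"
  assumes sbo: "SBO_jump_M_convex f"
    and f1: "f x1 \<noteq> \<infinity>" and f2: "f x2 \<noteq> \<infinity>" and nm1: "f x1 \<noteq> -\<infinity>"
    and p1: "\<forall>j. x1 j mod 2 = r j mod 2" and p2: "\<forall>j. x2 j mod 2 = r j mod 2"
    and pz: "\<forall>j. z j mod 2 = r j mod 2"
    and neg: "(x1 i - z i) * (x2 i - z i) < 0"
  shows "\<exists>S. (\<forall>j. even (S j)) \<and>
     (\<forall>j. (0 \<le> x2 j - x1 j \<longrightarrow> 0 \<le> S j \<and> S j \<le> x2 j - x1 j) \<and>
          (x2 j - x1 j \<le> 0 \<longrightarrow> x2 j - x1 j \<le> S j \<and> S j \<le> 0)) \<and>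
     S i \<noteq> 0 \<and> \<bar>S i\<bar> < \<bar>x2 i - x1 i\<bar> \<and> f (x1 + S) + f (x2 - S) \<le> f x1 + f x2"
proof -
  have "f x1 < \<infinity>" using f1 by (cases "f x1") auto
  moreover have "f x2 < \<infinity>" using f2 by (cases "f x2") auto
  ultimately obtain ps gs where tsd: "two_step_decomp ps (x2 - x1)" and lg: "length gs = length ps"
    and fx2: "f x2 = f x1 + ereal (sum_list gs)"
    and ex: "\<forall>I\<subseteq>{..<length ps}. f (x1 + (\<Sum>k\<in>I. ps ! k)) \<le> f x1 + ereal (\<Sum>k\<in>I. gs ! k)"
    using sbo unfolding SBO_jump_M_convex_def by blast
  define n where "n = length ps"
  define d where "d = x2 - x1"
  have dapp: "d j = x2 j - x1 j" for j by (simp add: d_def)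
  have steps: "\<forall>p\<in>set ps. norm1 p = 2 \<and> conf_le p d" and sl: "sum_list ps = d"
    using tsd by (auto simp: two_step_decomp_def d_def)
  have slr: "sum_list ps = (\<Sum>k<n. ps ! k)"
    by (simp add: sum_list_sum_nth n_def atLeast0LessThan)
  have dj: "d j = (\<Sum>k<n. (ps!k) j)" for j
    using sl slr sum_fun_apply by metis
  have psk: "norm1 (ps!k) = 2" "conf_le (ps!k) d" if "k < n" for k
    using steps that n_def nth_mem by auto
  have sg_pos: "0 \<le> (ps!k) j" if "k<n" "0 \<le> d j" for k j
  proof -
    have c: "\<bar>(ps!k) j\<bar> \<le> \<bar>d j\<bar>" "(ps!k) j * d j \<ge> 0" using psk(2)[OF that(1)] unfolding conf_le_def by auto
    show ?thesis
    proof (cases "d j = 0")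
      case True then show ?thesis using c by simp
    next
      case False then have "d j > 0" using that by simp
      then show ?thesis using c(2) by (simp add: zero_le_mult_iff)
    qed
  qed
  have sg_neg: "(ps!k) j \<le> 0" if "k<n" "d j \<le> 0" for k j
  proof -
    have c: "\<bar>(ps!k) j\<bar> \<le> \<bar>d j\<bar>" "(ps!k) j * d j \<ge> 0" using psk(2)[OF that(1)] unfolding conf_le_def by auto
    show ?thesis
    proof (cases "d j = 0")
      case True then show ?thesis using c by simp
    next
      case False then have "d j < 0" using that by simp
      then show ?thesis using c(2) by (simp add: zero_le_mult_iff)
    qed
  qed
  have deven: "even (d j)" for j
    using p1 p2 dapp by (metis mod_eq_dvd_iff)
  have di4: "4 \<le> \<bar>d i\<bar>"
  proof -
    have eu: "even (x1 i - z i)" using p1 pz by (metis mod_eq_dvd_iff)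
    have ew: "even (x2 i - z i)" using p2 pz by (metis mod_eq_dvd_iff)
    have "(x1 i - z i < 0 \<and> x2 i - z i > 0) \<or> (x1 i - z i > 0 \<and> x2 i - z i < 0)"
      using neg by (simp add: mult_less_0_iff) linarith
    then show ?thesis using eu ew dapp[of i] by presburger
  qed
  have slapp: "(sum_list ps) j = (\<Sum>q\<in>#mset ps. q j)" for j by (rule sum_list_apply)
  have I1a: "\<forall>q\<in>#mset ps. even (\<Sum>j\<in>UNIV. q j)" using steps norm1_even_sum by auto
  have I1b: "\<forall>q\<in>#mset ps. \<forall>a b c. a\<noteq>b \<and> a\<noteq>c \<and> b\<noteq>c \<longrightarrow> \<not>(odd (q a) \<and> odd (q b) \<and> odd (q c))"
    using steps norm1_three by (metis set_mset_mset)
  have I2: "\<forall>q\<in>#mset ps. q i = 0 \<or> \<bar>q i\<bar> = 1 \<or> (\<bar>q i\<bar> = 2 \<and> (\<forall>j. even (q j)))"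
    using steps norm1_coord by (metis set_mset_mset)
  have I4: "\<forall>j. even (\<Sum>q\<in>#mset ps. q j)" using slapp sl deven by metis
  have I5: "\<exists>q\<in>#mset ps. q i \<noteq> 0"
  proof (rule ccontr)
    assume "\<not> ?thesis"
    hence "(\<Sum>q\<in>#mset ps. q i) = 0" by (simp add: sum_mset.neutral)
    hence "d i = 0" using slapp sl by metis
    then show False using di4 by simp
  qed
  obtain A where A: "A \<subseteq># mset ps" "\<forall>j. even (\<Sum>q\<in>#A. q j)" "0 < (\<Sum>q\<in>#A. \<bar>q i\<bar>)"
    "(\<Sum>q\<in>#A. \<bar>q i\<bar>) \<le> 2"
    using parity_lemma[OF I1a I1b I2 I4 I5] by blast
  obtain I where I: "I \<subseteq> {..<n}" "A = image_mset (nth ps) (mset_set I)"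
    using sub_mset_idx[of "{..<n}" A "nth ps"] A(1) mset_nth[of ps] n_def by auto
  have finI: "finite I" using I(1) finite_subset by blast
  have Asum: "(\<Sum>q\<in>#A. h q) = (\<Sum>k\<in>I. h (ps!k))" for h :: "('m \<Rightarrow> int) \<Rightarrow> int"
    using I(2) by (simp add: sum_unfold_sum_mset multiset.map_comp comp_def)
  define S where "S = (\<Sum>k\<in>I. ps ! k)"
  have Sj: "S j = (\<Sum>k\<in>I. (ps!k) j)" for j by (simp add: S_def sum_fun_apply)
  have Seven: "\<forall>j. even (S j)"
  proof
    fix j
    have "even (\<Sum>q\<in>#A. q j)" using A(2) by blast
    then show "even (S j)" using Asum[of "\<lambda>q. q j"] Sj[of j] by simp
  qed
  have Sbox: "(0 \<le> x2 j - x1 j \<longrightarrow> 0 \<le> S j \<and> S j \<le> x2 j - x1 j) \<and>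
          (x2 j - x1 j \<le> 0 \<longrightarrow> x2 j - x1 j \<le> S j \<and> S j \<le> 0)" for j
  proof (intro conjI impI)
    assume h: "0 \<le> x2 j - x1 j"
    hence h': "0 \<le> d j" using dapp by simp
    show "0 \<le> S j" unfolding Sj using sg_pos h' I(1) by (intro sum_nonneg) auto
    have "(\<Sum>k\<in>I. (ps!k) j) \<le> (\<Sum>k<n. (ps!k) j)"
      using sg_pos h' I(1) by (intro sum_mono2) auto
    then show "S j \<le> x2 j - x1 j" using Sj dj dapp by metis
  next
    assume h: "x2 j - x1 j \<le> 0"
    hence h': "d j \<le> 0" using dapp by simp
    show "S j \<le> 0" unfolding Sj using sg_neg h' I(1) by (intro sum_nonpos) auto
    have "(\<Sum>k<n. (ps!k) j) \<le> (\<Sum>k\<in>I. (ps!k) j)"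
    proof -
      have "(\<Sum>k<n. (ps!k) j) = (\<Sum>k\<in>I. (ps!k) j) + (\<Sum>k\<in>{..<n} - I. (ps!k) j)"
        using I(1) by (metis finite_lessThan sum.subset_diff add.commute)
      moreover have "(\<Sum>k\<in>{..<n} - I. (ps!k) j) \<le> 0" using sg_neg h' by (intro sum_nonpos) auto
      ultimately show ?thesis by linarith
    qed
    then show "x2 j - x1 j \<le> S j" using Sj dj dapp by metis
  qed
  have Si: "\<bar>S i\<bar> = (\<Sum>k\<in>I. \<bar>(ps!k) i\<bar>)"
  proof (cases "0 \<le> d i")
    case True
    have "(\<Sum>k\<in>I. \<bar>(ps!k) i\<bar>) = (\<Sum>k\<in>I. (ps!k) i)"
      using sg_pos True I(1) by (intro sum.cong) auto
    moreover have "0 \<le> (\<Sum>k\<in>I. (ps!k) i)" using sg_pos True I(1) by (intro sum_nonneg) auto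
    ultimately show ?thesis using Sj by simp
  next
    case False
    have "(\<Sum>k\<in>I. \<bar>(ps!k) i\<bar>) = (\<Sum>k\<in>I. - (ps!k) i)"
      using sg_neg False I(1) by (intro sum.cong) auto
    moreover have "(\<Sum>k\<in>I. (ps!k) i) \<le> 0" using sg_neg False I(1) by (intro sum_nonpos) auto
    ultimately show ?thesis using Sj by (simp add: sum_negf)
  qed
  have Si2: "0 < \<bar>S i\<bar>" "\<bar>S i\<bar> \<le> 2" using A(3,4) Asum[of "\<lambda>q. \<bar>q i\<bar>"] Si by auto
  have Si3: "\<bar>S i\<bar> < \<bar>x2 i - x1 i\<bar>" using Si2 di4 dapp by simp
  define Ic where "Ic = {..<n} - I"
  have fS: "f (x1 + S) \<le> f x1 + ereal (\<Sum>k\<in>I. gs ! k)" using ex I(1) n_def S_def by blast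
  have sIc: "(\<Sum>k\<in>Ic. ps ! k) = d - S"
    using I(1) slr sl by (simp add: Ic_def S_def sum_diff)
  have x2S: "x1 + (d - S) = x2 - S" by (simp add: d_def algebra_simps)
  have hIc: "Ic \<subseteq> {..<length ps}" by (auto simp: Ic_def n_def)
  have "f (x1 + (\<Sum>k\<in>Ic. ps ! k)) \<le> f x1 + ereal (\<Sum>k\<in>Ic. gs ! k)" using ex hIc by blast
  then have fSc: "f (x2 - S) \<le> f x1 + ereal (\<Sum>k\<in>Ic. gs ! k)"
    by (simp only: sIc x2S)
  have gsum: "sum_list gs = (\<Sum>k\<in>I. gs ! k) + (\<Sum>k\<in>Ic. gs ! k)"
  proof -
    have "sum_list gs = (\<Sum>k<n. gs ! k)" using lg n_def by (simp add: sum_list_sum_nth atLeast0LessThan)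
    also have "\<dots> = (\<Sum>k\<in>I. gs ! k) + (\<Sum>k\<in>Ic. gs ! k)"
      using I(1) unfolding Ic_def by (metis finite_lessThan sum.subset_diff add.commute)
    finally show ?thesis .
  qed
  obtain a where a: "f x1 = ereal a" using f1 nm1 by (cases "f x1") auto
  have "f (x1 + S) + f (x2 - S) \<le> (f x1 + ereal (\<Sum>k\<in>I. gs ! k)) + (f x1 + ereal (\<Sum>k\<in>Ic. gs ! k))"
    using fS fSc by (rule add_mono)
  also have "\<dots> = f x1 + f x2" using a fx2 gsum by simp
  finally have fin: "f (x1 + S) + f (x2 - S) \<le> f x1 + f x2" .
  have SboxA: "\<forall>j. (0 \<le> x2 j - x1 j \<longrightarrow> 0 \<le> S j \<and> S j \<le> x2 j - x1 j) \<and>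
          (x2 j - x1 j \<le> 0 \<longrightarrow> x2 j - x1 j \<le> S j \<and> S j \<le> 0)" using Sbox by blast
  have SiNZ: "S i \<noteq> 0" using Si2 by auto
  show ?thesis using Seven SboxA SiNZ Si3 fin by (intro exI[of _ S] conjI) assumption+
qed

locale lpset =
  fixes f :: "('m::finite \<Rightarrow> int) \<Rightarrow> ereal" and r z lo hi :: "'m \<Rightarrow> int"
  assumes sbo: "SBO_jump_M_convex f" and ninf: "\<forall>x. f x \<noteq> -\<infinity>"
    and zpar: "\<forall>i. z i mod 2 = r i mod 2"
begin

definition P where
  "P = {x. (\<forall>i. lo i \<le> x i \<and> x i \<le> hi i) \<and> (\<forall>i. x i mod 2 = r i mod 2) \<and> f x \<noteq> \<infinity>}"
definition fr where "fr x = real_of_ereal (f x)"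
definition phi where "phi x = (\<Sum>i\<in>UNIV. (real_of_int (x i - z i))^2)"
definition feas where
  "feas \<mu> \<longleftrightarrow> (\<forall>x. 0 \<le> \<mu> x) \<and> (\<forall>x. \<mu> x \<noteq> 0 \<longrightarrow> x \<in> P) \<and> (\<Sum>x\<in>P. \<mu> x) = 1 \<and>
     (\<forall>i. (\<Sum>x\<in>P. \<mu> x * real_of_int (x i)) = real_of_int (z i))"
definition cost where "cost \<mu> = (\<Sum>x\<in>P. \<mu> x * fr x)"
definition psi where "psi \<mu> = (\<Sum>x\<in>P. \<mu> x * phi x)"
definition basic where
  "basic \<mu> \<longleftrightarrow> (\<forall>\<nu>. (\<forall>x. \<nu> x \<noteq> 0 \<longrightarrow> \<mu> x \<noteq> 0) \<and> (\<Sum>x\<in>P. \<nu> x) = 0 \<and>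
     (\<forall>i. (\<Sum>x\<in>P. \<nu> x * real_of_int (x i)) = 0) \<longrightarrow> (\<forall>x. \<nu> x = 0))"
definition val where "val \<mu> = (cost \<mu>, psi \<mu>)"

lemma finP: "finite P"
proof -
  define L where "L = Min (range lo)"
  define H where "H = Max (range hi)"
  have "P \<subseteq> {g. \<forall>x. (x \<in> UNIV \<longrightarrow> g x \<in> {L..H}) \<and> (x \<notin> UNIV \<longrightarrow> g x = 0)}"
  proof
    fix g assume "g \<in> P"
    hence h: "lo i \<le> g i \<and> g i \<le> hi i" for i by (auto simp: P_def)
    have "L \<le> lo i" for i unfolding L_def by (rule Min_le) auto
    moreover have "hi i \<le> H" for i unfolding H_def by (rule Max_ge) auto
    ultimately have "\<forall>x. g x \<in> {L..H}" using h by (meson atLeastAtMost_iff order_trans)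
    then show "g \<in> {g. \<forall>x. (x \<in> UNIV \<longrightarrow> g x \<in> {L..H}) \<and> (x \<notin> UNIV \<longrightarrow> g x = 0)}"
      by simp
  qed
  moreover have "finite {g::'m \<Rightarrow> int. \<forall>x. (x \<in> UNIV \<longrightarrow> g x \<in> {L..H}) \<and> (x \<notin> UNIV \<longrightarrow> g x = 0)}"
    by (rule finite_set_of_finite_funs) auto
  ultimately show ?thesis using finite_subset by blast
qed

lemma lin_h: fixes a b h :: "('m \<Rightarrow> int) \<Rightarrow> real" and t :: real shows "(\<Sum>x\<in>P. (a x - t * b x) * h x) = (\<Sum>x\<in>P. a x * h x) - t * (\<Sum>x\<in>P. b x * h x)"
  by (simp add: left_diff_distrib sum_subtractf sum_distrib_left mult.assoc)

lemma lin_1: fixes a b :: "('m \<Rightarrow> int) \<Rightarrow> real" and t :: real shows "(\<Sum>x\<in>P. (a x - t * b x)) = (\<Sum>x\<in>P. a x) - t * (\<Sum>x\<in>P. b x)"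
  by (simp add: sum_subtractf sum_distrib_left)

lemma uniq:
  assumes "feas \<mu>1" "feas \<mu>2" "basic \<mu>1" "{x. \<mu>1 x \<noteq> 0} = {x. \<mu>2 x \<noteq> 0}"
  shows "\<mu>1 = \<mu>2"
proof -
  define \<nu> where "\<nu> x = \<mu>1 x - \<mu>2 x" for x
  have s: "\<forall>x. \<nu> x \<noteq> 0 \<longrightarrow> \<mu>1 x \<noteq> 0"
  proof (intro allI impI notI)
    fix x assume a: "\<nu> x \<noteq> 0" "\<mu>1 x = 0"
    then have "\<mu>2 x = 0" using assms(4) by (metis (mono_tags, lifting) mem_Collect_eq)
    then show False using a unfolding \<nu>_def by simp
  qed
  have s1: "(\<Sum>x\<in>P. \<nu> x) = 0" using assms(1,2) lin_1[of \<mu>1 1 \<mu>2] unfolding \<nu>_def feas_def by simp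
  have s2: "\<forall>i. (\<Sum>x\<in>P. \<nu> x * real_of_int (x i)) = 0"
  proof
    fix i show "(\<Sum>x\<in>P. \<nu> x * real_of_int (x i)) = 0"
      using assms(1,2) lin_h[of \<mu>1 1 \<mu>2 "\<lambda>x. real_of_int (x i)"] unfolding \<nu>_def feas_def by simp
  qed
  have "\<forall>x. \<nu> x = 0" using assms(3) s s1 s2 unfolding basic_def by blast
  then show ?thesis unfolding \<nu>_def by auto
qed

lemma finB: "finite {\<mu>. feas \<mu> \<and> basic \<mu>}"
proof (rule finite_imageD)
  show "inj_on (\<lambda>\<mu>. {x. \<mu> x \<noteq> 0}) {\<mu>. feas \<mu> \<and> basic \<mu>}"
    using uniq by (intro inj_onI) blast
  have "(\<lambda>\<mu>. {x. \<mu> x \<noteq> 0}) ` {\<mu>. feas \<mu> \<and> basic \<mu>} \<subseteq> Pow P"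
    unfolding feas_def by auto
  then show "finite ((\<lambda>\<mu>. {x. \<mu> x \<noteq> 0}) ` {\<mu>. feas \<mu> \<and> basic \<mu>})"
    using finP finite_subset by blast
qed

lemma reduce: "feas \<mu> \<Longrightarrow> \<exists>\<mu>'. feas \<mu>' \<and> basic \<mu>' \<and> val \<mu>' \<le> val \<mu>"
proof (induction "card {x\<in>P. \<mu> x \<noteq> 0}" arbitrary: \<mu> rule: less_induct)
  case less
  note fe = less.prems
  show ?case
  proof (cases "basic \<mu>")
    case True then show ?thesis using fe by blast
  next
    case False
    then obtain \<nu> where nsupp: "\<forall>x. \<nu> x \<noteq> 0 \<longrightarrow> \<mu> x \<noteq> 0" and ns1: "(\<Sum>x\<in>P. \<nu> x) = 0"
      and ns2: "\<forall>i. (\<Sum>x\<in>P. \<nu> x * real_of_int (x i)) = 0" and nz: "\<exists>x. \<nu> x \<noteq> 0"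
      unfolding basic_def by blast
    have supP: "\<mu> x \<noteq> 0 \<Longrightarrow> x \<in> P" for x using fe unfolding feas_def by blast
    have mnn: "0 \<le> \<mu> x" for x using fe unfolding feas_def by blast
    define \<nu>' where "\<nu>' = (if 0 < cost \<nu> \<or> (cost \<nu> = 0 \<and> 0 \<le> psi \<nu>) then \<nu> else (\<lambda>x. - \<nu> x))"
    have n'supp: "\<forall>x. \<nu>' x \<noteq> 0 \<longrightarrow> \<mu> x \<noteq> 0" using nsupp unfolding \<nu>'_def by auto
    have n's1: "(\<Sum>x\<in>P. \<nu>' x) = 0" using ns1 unfolding \<nu>'_def by (simp add: sum_negf)
    have n's2: "(\<Sum>x\<in>P. \<nu>' x * real_of_int (x i)) = 0" for i
      using ns2 unfolding \<nu>'_def by (simp add: sum_negf)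
    have n'z: "\<exists>x. \<nu>' x \<noteq> 0" using nz unfolding \<nu>'_def by auto
    have cneg: "cost (\<lambda>x. - \<nu> x) = - cost \<nu>" "psi (\<lambda>x. - \<nu> x) = - psi \<nu>"
      unfolding cost_def psi_def by (simp_all add: sum_negf)
    have lexpos: "0 \<le> cost \<nu>' \<and> (cost \<nu>' = 0 \<longrightarrow> 0 \<le> psi \<nu>')"
      unfolding \<nu>'_def using cneg by auto
    have pos: "\<exists>x\<in>P. \<nu>' x > 0"
    proof (rule ccontr)
      assume "\<not> ?thesis"
      hence np: "\<forall>x\<in>P. \<nu>' x \<le> 0" by auto
      have "(\<Sum>x\<in>P. - \<nu>' x) = 0" using n's1 by (simp add: sum_negf)
      hence "\<forall>x\<in>P. - \<nu>' x = 0" using sum_nonneg_eq_0_iff[OF finP, of "\<lambda>x. - \<nu>' x"] np by auto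
      moreover obtain x where "\<nu>' x \<noteq> 0" using n'z by blast
      moreover have "x \<in> P" using calculation(2) n'supp supP by blast
      ultimately show False by auto
    qed
    define Pos where "Pos = {x\<in>P. \<nu>' x > 0}"
    have finPos: "finite Pos" using finP unfolding Pos_def by auto
    have nePos: "Pos \<noteq> {}" using pos unfolding Pos_def by auto
    define t where "t = Min ((\<lambda>x. \<mu> x / \<nu>' x) ` Pos)"
    have "t \<in> (\<lambda>x. \<mu> x / \<nu>' x) ` Pos" unfolding t_def
      using finPos nePos by (intro Min_in) auto
    then obtain x0 where x0: "x0 \<in> Pos" "t = \<mu> x0 / \<nu>' x0" by blast
    have tle: "t \<le> \<mu> x / \<nu>' x" if "x \<in> Pos" for x
      unfolding t_def using finPos that by (intro Min_le) auto
    have t0: "0 \<le> t" using x0 mnn unfolding Pos_def by auto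
    define \<mu>' where "\<mu>' x = \<mu> x - t * \<nu>' x" for x
    have m'nn: "0 \<le> \<mu>' x" for x
    proof (cases "\<nu>' x > 0")
      case True
      hence "\<mu> x \<noteq> 0" using n'supp by auto
      hence "x \<in> Pos" using True supP unfolding Pos_def by auto
      hence "t \<le> \<mu> x / \<nu>' x" by (rule tle)
      hence "t * \<nu>' x \<le> \<mu> x" using True by (simp add: pos_le_divide_eq)
      then show ?thesis unfolding \<mu>'_def by simp
    next
      case False
      hence "t * \<nu>' x \<le> 0" using t0 by (simp add: mult_nonneg_nonpos)
      then show ?thesis unfolding \<mu>'_def using mnn[of x] by simp
    qed
    have m'supp: "\<mu>' x \<noteq> 0 \<Longrightarrow> \<mu> x \<noteq> 0" for x
      using n'supp unfolding \<mu>'_def by force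
    have fe': "feas \<mu>'"
      unfolding feas_def
    proof (intro conjI allI impI)
      show "0 \<le> \<mu>' x" for x by (rule m'nn)
      show "\<mu>' x \<noteq> 0 \<Longrightarrow> x \<in> P" for x using m'supp supP by blast
      show "(\<Sum>x\<in>P. \<mu>' x) = 1" unfolding \<mu>'_def using lin_1[of \<mu> t \<nu>'] n's1 fe
        unfolding feas_def by simp
      show "(\<Sum>x\<in>P. \<mu>' x * real_of_int (x i)) = real_of_int (z i)" for i
        unfolding \<mu>'_def using lin_h[of \<mu> t \<nu>' "\<lambda>x. real_of_int (x i)"] n's2[of i] fe
        unfolding feas_def by simp
    qed
    have card: "card {x\<in>P. \<mu>' x \<noteq> 0} < card {x\<in>P. \<mu> x \<noteq> 0}"
    proof (rule psubset_card_mono)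
      show "finite {x\<in>P. \<mu> x \<noteq> 0}" using finP by auto
      have "x0 \<in> {x\<in>P. \<mu> x \<noteq> 0}" using x0(1) n'supp unfolding Pos_def by auto
      moreover have "\<mu>' x0 = 0" using x0 unfolding \<mu>'_def Pos_def by auto
      ultimately show "{x\<in>P. \<mu>' x \<noteq> 0} \<subset> {x\<in>P. \<mu> x \<noteq> 0}" using m'supp by blast
    qed
    have vle: "val \<mu>' \<le> val \<mu>"
    proof -
      have c: "cost \<mu>' = cost \<mu> - t * cost \<nu>'" unfolding cost_def \<mu>'_def by (rule lin_h)
      have p: "psi \<mu>' = psi \<mu> - t * psi \<nu>'" unfolding psi_def \<mu>'_def by (rule lin_h)
      have tc: "0 \<le> t * cost \<nu>'" using t0 lexpos by simp
      show ?thesis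
      proof (cases "t * cost \<nu>' = 0")
        case True
        hence "t = 0 \<or> cost \<nu>' = 0" by simp
        hence "0 \<le> t * psi \<nu>'" using t0 lexpos by auto
        then show ?thesis using c p True unfolding val_def by (simp add: less_eq_prod_simp)
      next
        case False
        hence "0 < t * cost \<nu>'" using tc by linarith
        then show ?thesis using c p unfolding val_def by (simp add: less_eq_prod_simp)
      qed
    qed
    obtain \<mu>'' where "feas \<mu>''" "basic \<mu>''" "val \<mu>'' \<le> val \<mu>'"
      using less.hyps[OF card fe'] by blast
    then show ?thesis using vle order_trans by blast
  qed
qed

end

lemma coord_real:
  fixes u w s :: real
  assumes "(0 \<le> w - u \<longrightarrow> 0 \<le> s \<and> s \<le> w - u) \<and> (w - u \<le> 0 \<longrightarrow> w - u \<le> s \<and> s \<le> 0)"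
  shows "(u + s)^2 + (w - s)^2 \<le> u^2 + w^2"
    and "s \<noteq> 0 \<Longrightarrow> \<bar>s\<bar> < \<bar>w - u\<bar> \<Longrightarrow> (u + s)^2 + (w - s)^2 < u^2 + w^2"
proof -
  have id: "(u + s)^2 + (w - s)^2 = u^2 + w^2 - 2 * (s * ((w - u) - s))"
    by (simp add: power2_eq_square algebra_simps)
  have "0 \<le> s * ((w - u) - s)"
  proof (cases "0 \<le> w - u")
    case True then show ?thesis using assms by (simp add: mult_nonneg_nonneg)
  next
    case False then show ?thesis using assms by (simp add: mult_nonpos_nonpos)
  qed
  then show "(u + s)^2 + (w - s)^2 \<le> u^2 + w^2" using id by linarith
  assume h: "s \<noteq> 0" "\<bar>s\<bar> < \<bar>w - u\<bar>"
  have "0 < s * ((w - u) - s)"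
  proof (cases "0 \<le> w - u")
    case True
    hence "0 < s" "s < w - u" using assms h by auto
    then show ?thesis by (simp add: mult_pos_pos)
  next
    case False
    hence "s < 0" "w - u < s" using assms h by auto
    then show ?thesis by (simp add: mult_neg_neg)
  qed
  then show "(u + s)^2 + (w - s)^2 < u^2 + w^2" using id by linarith
qed

lemma sum_zero_neg:
  fixes g :: "'a \<Rightarrow> real"
  assumes "finite A" "sum g A = 0" "a \<in> A" "g a > 0"
  shows "\<exists>b\<in>A. g b < 0"
proof (rule ccontr)
  assume "\<not> ?thesis"
  hence "\<forall>b\<in>A. 0 \<le> g b" by auto
  hence "g a \<le> sum g A" using assms by (intro member_le_sum) auto
  then show False using assms by simp
qed

lemma sum_neg_ex:
  fixes g :: "'a \<Rightarrow> real"
  assumes "sum g A < 0"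
  shows "\<exists>b\<in>A. g b < 0"
proof (rule ccontr)
  assume "\<not> ?thesis"
  hence "\<forall>b\<in>A. 0 \<le> g b" by auto
  hence "0 \<le> sum g A" by (intro sum_nonneg) auto
  then show False using assms by simp
qed

lemma even_mod_add: "even (s::int) \<Longrightarrow> (a + s) mod 2 = a mod 2"
  by (elim evenE) simp

lemma even_mod_sub: "even (s::int) \<Longrightarrow> (a - s) mod 2 = a mod 2"
  using even_mod_add[of "-s" a] by simp

context lpset begin

lemma fP: "x \<in> P \<Longrightarrow> f x = ereal (fr x)"
  using ninf unfolding P_def fr_def by (cases "f x") auto

lemma ind_sum:
  fixes h :: "('m \<Rightarrow> int) \<Rightarrow> real"
  assumes "a \<in> P"
  shows "(\<Sum>x\<in>P. (if x = a then 1 else 0) * h x) = h a"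
proof -
  have "(\<Sum>x\<in>P. (if x = a then 1 else 0) * h x) = (\<Sum>x\<in>P. if x = a then h x else 0)"
    by (rule sum.cong) auto
  also have "\<dots> = h a" using assms finP by (simp add: sum.delta)
  finally show ?thesis .
qed

lemma lin4:
  fixes h \<mu> :: "('m \<Rightarrow> int) \<Rightarrow> real" and e :: real
  assumes "a1 \<in> P" "a2 \<in> P" "a3 \<in> P" "a4 \<in> P"
  shows "(\<Sum>x\<in>P. (\<mu> x + e * ((if x = a1 then 1 else 0) + (if x = a2 then 1 else 0)
            - (if x = a3 then 1 else 0) - (if x = a4 then 1 else 0))) * h x)
       = (\<Sum>x\<in>P. \<mu> x * h x) + e * (h a1 + h a2 - h a3 - h a4)"
proof -
  let ?i = "\<lambda>a x. (if x = a then 1 else 0 :: real)"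
  have s0: "(\<Sum>x\<in>P. (\<mu> x + e * (?i a1 x + ?i a2 x - ?i a3 x - ?i a4 x)) * h x)
      = (\<Sum>x\<in>P. \<mu> x * h x + e * (?i a1 x * h x + ?i a2 x * h x - ?i a3 x * h x - ?i a4 x * h x))"
    by (rule sum.cong) (auto simp: algebra_simps)
  have s1: "(\<Sum>x\<in>P. \<mu> x * h x + e * (?i a1 x * h x + ?i a2 x * h x - ?i a3 x * h x - ?i a4 x * h x))
     = (\<Sum>x\<in>P. \<mu> x * h x) + (\<Sum>x\<in>P. e * (?i a1 x * h x + ?i a2 x * h x - ?i a3 x * h x - ?i a4 x * h x))"
    by (rule sum.distrib)
  have s2: "(\<Sum>x\<in>P. e * (?i a1 x * h x + ?i a2 x * h x - ?i a3 x * h x - ?i a4 x * h x))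
      = e * (\<Sum>x\<in>P. (?i a1 x * h x + ?i a2 x * h x - ?i a3 x * h x - ?i a4 x * h x))"
    by (rule sum_distrib_left[symmetric])
  have s3: "(\<Sum>x\<in>P. (?i a1 x * h x + ?i a2 x * h x - ?i a3 x * h x - ?i a4 x * h x))
      = (\<Sum>x\<in>P. ?i a1 x * h x) + (\<Sum>x\<in>P. ?i a2 x * h x) - (\<Sum>x\<in>P. ?i a3 x * h x) - (\<Sum>x\<in>P. ?i a4 x * h x)"
    by (simp only: sum.distrib sum_subtractf)
  show ?thesis
    by (simp only: s0 s1 s2 s3 ind_sum[OF assms(1)] ind_sum[OF assms(2)] ind_sum[OF assms(3)] ind_sum[OF assms(4)])
qed

end

context lpset begin

lemma move:
  assumes fe: "feas \<mu>" and x1: "x1 \<in> P" and x2: "x2 \<in> P" and m1: "\<mu> x1 > 0" and m2: "\<mu> x2 > 0"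
    and neg: "(x1 i - z i) * (x2 i - z i) < 0"
  shows "\<exists>\<mu>'. feas \<mu>' \<and> val \<mu>' < val \<mu>"
proof -
  have box1: "lo j \<le> x1 j \<and> x1 j \<le> hi j" for j using x1 unfolding P_def by auto
  have box2: "lo j \<le> x2 j \<and> x2 j \<le> hi j" for j using x2 unfolding P_def by auto
  have par1: "\<forall>j. x1 j mod 2 = r j mod 2" using x1 unfolding P_def by auto
  have par2: "\<forall>j. x2 j mod 2 = r j mod 2" using x2 unfolding P_def by auto
  have f1: "f x1 \<noteq> \<infinity>" using x1 unfolding P_def by auto
  have f2: "f x2 \<noteq> \<infinity>" using x2 unfolding P_def by auto
  obtain S where Sev: "\<forall>j. even (S j)"
    and Sbox: "\<forall>j. (0 \<le> x2 j - x1 j \<longrightarrow> 0 \<le> S j \<and> S j \<le> x2 j - x1 j) \<and>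
          (x2 j - x1 j \<le> 0 \<longrightarrow> x2 j - x1 j \<le> S j \<and> S j \<le> 0)"
    and Si: "S i \<noteq> 0" "\<bar>S i\<bar> < \<bar>x2 i - x1 i\<bar>"
    and fin: "f (x1 + S) + f (x2 - S) \<le> f x1 + f x2"
    using exch_pair[OF sbo f1 f2 _ par1 par2 zpar neg] ninf by blast
  define y where "y = x1 + S"
  define y' where "y' = x2 - S"
  have yj: "y j = x1 j + S j" for j by (simp add: y_def)
  have y'j: "y' j = x2 j - S j" for j by (simp add: y'_def)
  have sbj: "(0 \<le> x2 j - x1 j \<longrightarrow> 0 \<le> S j \<and> S j \<le> x2 j - x1 j) \<and>
          (x2 j - x1 j \<le> 0 \<longrightarrow> x2 j - x1 j \<le> S j \<and> S j \<le> 0)" for j using Sbox by blast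
  have ybox: "lo j \<le> y j \<and> y j \<le> hi j" for j
  proof (cases "0 \<le> x2 j - x1 j")
    case True then show ?thesis using sbj[of j] box1[of j] box2[of j] yj[of j] by auto
  next
    case False then show ?thesis using sbj[of j] box1[of j] box2[of j] yj[of j] by auto
  qed
  have y'box: "lo j \<le> y' j \<and> y' j \<le> hi j" for j
  proof (cases "0 \<le> x2 j - x1 j")
    case True then show ?thesis using sbj[of j] box1[of j] box2[of j] y'j[of j] by auto
  next
    case False then show ?thesis using sbj[of j] box1[of j] box2[of j] y'j[of j] by auto
  qed
  have ypar: "y j mod 2 = r j mod 2" for j using yj even_mod_add Sev par1 by metis
  have y'par: "y' j mod 2 = r j mod 2" for j using y'j even_mod_sub Sev par2 by metis
  have fx1: "f x1 = ereal (fr x1)" using x1 by (rule fP)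
  have fx2: "f x2 = ereal (fr x2)" using x2 by (rule fP)
  have fyfin: "f y \<noteq> \<infinity>"
  proof
    assume "f y = \<infinity>"
    hence "f (x1 + S) + f (x2 - S) = \<infinity>" using ninf y_def by simp
    hence "\<infinity> \<le> f x1 + f x2" using fin by metis
    then show False using fx1 fx2 by simp
  qed
  have fy'fin: "f y' \<noteq> \<infinity>"
  proof
    assume "f y' = \<infinity>"
    hence "f (x1 + S) + f (x2 - S) = \<infinity>" using ninf y'_def by (cases "f (x1 + S)") auto
    hence "\<infinity> \<le> f x1 + f x2" using fin by metis
    then show False using fx1 fx2 by simp
  qed
  have yP: "y \<in> P" using ybox ypar fyfin unfolding P_def by auto
  have y'P: "y' \<in> P" using y'box y'par fy'fin unfolding P_def by auto
  have frle: "fr y + fr y' \<le> fr x1 + fr x2"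
    using fin fx1 fx2 fP[OF yP] fP[OF y'P] y_def y'_def by simp
  have philess: "phi y + phi y' < phi x1 + phi x2"
  proof -
    let ?u = "\<lambda>j. real_of_int (x1 j - z j)" and ?w = "\<lambda>j. real_of_int (x2 j - z j)"
      and ?s = "\<lambda>j. real_of_int (S j)"
    have c: "(0 \<le> ?w j - ?u j \<longrightarrow> 0 \<le> ?s j \<and> ?s j \<le> ?w j - ?u j) \<and>
          (?w j - ?u j \<le> 0 \<longrightarrow> ?w j - ?u j \<le> ?s j \<and> ?s j \<le> 0)" for j
    proof -
      have "?w j - ?u j = real_of_int (x2 j - x1 j)" by simp
      then show ?thesis using sbj[of j] by (simp only:) linarith
    qed
    have py: "phi y + phi y' = (\<Sum>j\<in>UNIV. (?u j + ?s j)^2 + (?w j - ?s j)^2)"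
      unfolding phi_def by (simp add: sum.distrib yj y'j algebra_simps)
    have px: "phi x1 + phi x2 = (\<Sum>j\<in>UNIV. (?u j)^2 + (?w j)^2)"
      unfolding phi_def by (simp add: sum.distrib)
    have "(\<Sum>j\<in>UNIV. (?u j + ?s j)^2 + (?w j - ?s j)^2) < (\<Sum>j\<in>UNIV. (?u j)^2 + (?w j)^2)"
    proof (rule sum_strict_mono_ex1)
      show "finite (UNIV :: 'm set)" by simp
      show "\<forall>j\<in>UNIV. (?u j + ?s j)^2 + (?w j - ?s j)^2 \<le> (?u j)^2 + (?w j)^2"
        using coord_real(1)[OF c] by blast
      have "?s i \<noteq> 0" using Si by simp
      moreover have "\<bar>?s i\<bar> < \<bar>?w i - ?u i\<bar>"
      proof -
        have "?w i - ?u i = real_of_int (x2 i - x1 i)" by simp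
        then show ?thesis using Si(2) by (simp only:)
      qed
      ultimately show "\<exists>j\<in>UNIV. (?u j + ?s j)^2 + (?w j - ?s j)^2 < (?u j)^2 + (?w j)^2"
        using coord_real(2)[OF c] by blast
    qed
    then show ?thesis using py px by simp
  qed
  have x12: "x1 \<noteq> x2"
  proof
    assume "x1 = x2"
    then have "0 \<le> (x1 i - z i) * (x2 i - z i)" by simp
    then show False using neg by simp
  qed
  define e where "e = min (\<mu> x1) (\<mu> x2)"
  have e0: "0 < e" using m1 m2 by (simp add: e_def)
  define \<mu>' where "\<mu>' x = \<mu> x + e * ((if x = y then 1 else 0) + (if x = y' then 1 else 0)
            - (if x = x1 then 1 else 0) - (if x = x2 then 1 else 0))" for x
  have mnn: "0 \<le> \<mu> x" for x using fe unfolding feas_def by blast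
  have supP: "\<mu> x \<noteq> 0 \<Longrightarrow> x \<in> P" for x using fe unfolding feas_def by blast
  have lin: "(\<Sum>x\<in>P. \<mu>' x * h x) = (\<Sum>x\<in>P. \<mu> x * h x) + e * (h y + h y' - h x1 - h x2)" for h
    unfolding \<mu>'_def by (rule lin4[OF yP y'P x1 x2])
  have fe': "feas \<mu>'"
    unfolding feas_def
  proof (intro conjI allI impI)
    fix x
    show "0 \<le> \<mu>' x"
    proof -
      have a: "0 \<le> e * ((if x = y then 1 else 0) + (if x = y' then 1 else 0))"
        using e0 by simp
      have b: "e * ((if x = x1 then 1 else 0) + (if x = x2 then 1 else 0)) \<le> \<mu> x"
        using x12 mnn[of x] e_def by auto
      have "\<mu>' x = \<mu> x + e * ((if x = y then 1 else 0) + (if x = y' then 1 else 0))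
          - e * ((if x = x1 then 1 else 0) + (if x = x2 then 1 else 0))"
        unfolding \<mu>'_def by (simp add: algebra_simps)
      then show ?thesis using a b by linarith
    qed
  next
    fix x assume "\<mu>' x \<noteq> 0"
    then show "x \<in> P" using supP yP y'P x1 x2 unfolding \<mu>'_def by (cases "x \<in> {y, y', x1, x2}") auto
  next
    have "(\<Sum>x\<in>P. \<mu>' x * 1) = (\<Sum>x\<in>P. \<mu> x * 1) + e * (1 + 1 - 1 - 1)" by (rule lin)
    then show "(\<Sum>x\<in>P. \<mu>' x) = 1" using fe unfolding feas_def by simp
  next
    fix j
    have "(\<Sum>x\<in>P. \<mu>' x * real_of_int (x j)) = (\<Sum>x\<in>P. \<mu> x * real_of_int (x j))
       + e * (real_of_int (y j) + real_of_int (y' j) - real_of_int (x1 j) - real_of_int (x2 j))"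
      by (rule lin)
    moreover have "real_of_int (y j) + real_of_int (y' j) - real_of_int (x1 j) - real_of_int (x2 j) = 0"
      using yj[of j] y'j[of j] by simp
    ultimately show "(\<Sum>x\<in>P. \<mu>' x * real_of_int (x j)) = real_of_int (z j)"
      using fe unfolding feas_def by simp
  qed
  have c: "cost \<mu>' \<le> cost \<mu>"
  proof -
    have "cost \<mu>' = cost \<mu> + e * (fr y + fr y' - fr x1 - fr x2)" unfolding cost_def by (rule lin)
    moreover have "e * (fr y + fr y' - fr x1 - fr x2) \<le> 0"
      using e0 frle by (simp add: mult_nonneg_nonpos)
    ultimately show ?thesis by simp
  qed
  have p: "psi \<mu>' < psi \<mu>"
  proof -
    have "psi \<mu>' = psi \<mu> + e * (phi y + phi y' - phi x1 - phi x2)" unfolding psi_def by (rule lin)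
    moreover have "e * (phi y + phi y' - phi x1 - phi x2) < 0"
      using e0 philess by (simp add: mult_pos_neg)
    ultimately show ?thesis by simp
  qed
  have "val \<mu>' < val \<mu>" using c p unfolding val_def by (simp add: less_prod_def)
  then show ?thesis using fe' by blast
qed

end

context lpset begin

lemma final:
  assumes f0: "feas \<mu>0"
  shows "f z \<le> ereal (cost \<mu>0)"
proof -
  define B where "B = {\<mu>. feas \<mu> \<and> basic \<mu>}"
  obtain \<mu>b where "\<mu>b \<in> B" using reduce[OF f0] B_def by auto
  hence neB: "val ` B \<noteq> {}" by auto
  have finV: "finite (val ` B)" using finB B_def by auto
  have "Min (val ` B) \<in> val ` B" using Min_in finV neB by blast
  then obtain \<mu>s where ms: "\<mu>s \<in> B" "val \<mu>s = Min (val ` B)" by auto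
  have minimal: "val \<mu>s \<le> val \<mu>" if fm: "feas \<mu>" for \<mu>
  proof -
    obtain \<mu>' where m': "feas \<mu>'" "basic \<mu>'" "val \<mu>' \<le> val \<mu>" using reduce[OF fm] by blast
    have "\<mu>' \<in> B" using m' B_def by simp
    hence "val \<mu>s \<le> val \<mu>'" unfolding ms(2) using finV by (intro Min_le) auto
    then show ?thesis using m'(3) by (rule order_trans)
  qed
  have fs: "feas \<mu>s" using ms B_def by auto
  have mnn: "0 \<le> \<mu>s x" for x using fs unfolding feas_def by blast
  have supP: "\<mu>s x \<noteq> 0 \<Longrightarrow> x \<in> P" for x using fs unfolding feas_def by blast
  have sum1: "(\<Sum>x\<in>P. \<mu>s x) = 1" using fs unfolding feas_def by blast
  have mean: "(\<Sum>x\<in>P. \<mu>s x * real_of_int (x j)) = real_of_int (z j)" for j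
    using fs unfolding feas_def by blast
  have supp_z: "\<mu>s x = 0" if xz: "x \<noteq> z" for x
  proof (rule ccontr)
    assume nz: "\<mu>s x \<noteq> 0"
    have xP: "x \<in> P" using supP nz by blast
    have mpos: "\<mu>s x > 0" using mnn[of x] nz by simp
    define u where "u j = real_of_int (x j - z j)" for j
    have inner: "(\<Sum>y\<in>P. \<mu>s y * (real_of_int (y j - z j) * u j)) = 0" for j
    proof -
      have "(\<Sum>y\<in>P. \<mu>s y * (real_of_int (y j - z j) * u j))
          = (\<Sum>y\<in>P. u j * (\<mu>s y * real_of_int (y j)) - u j * real_of_int (z j) * \<mu>s y)"
        by (rule sum.cong) (auto simp: algebra_simps)
      also have "\<dots> = u j * (\<Sum>y\<in>P. \<mu>s y * real_of_int (y j)) - u j * real_of_int (z j) * (\<Sum>y\<in>P. \<mu>s y)"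
        by (simp add: sum_subtractf sum_distrib_left)
      also have "\<dots> = 0" using mean[of j] sum1 by simp
      finally show ?thesis .
    qed
    have key: "(\<Sum>y\<in>P. \<mu>s y * (\<Sum>j\<in>UNIV. real_of_int (y j - z j) * u j)) = 0"
    proof -
      have "(\<Sum>y\<in>P. \<mu>s y * (\<Sum>j\<in>UNIV. real_of_int (y j - z j) * u j))
          = (\<Sum>y\<in>P. \<Sum>j\<in>UNIV. \<mu>s y * (real_of_int (y j - z j) * u j))"
        by (simp add: sum_distrib_left)
      also have "\<dots> = (\<Sum>j\<in>UNIV. \<Sum>y\<in>P. \<mu>s y * (real_of_int (y j - z j) * u j))"
        by (rule sum.swap)
      also have "\<dots> = 0" using inner by simp
      finally show ?thesis .
    qed
    obtain j0 where j0: "x j0 \<noteq> z j0" using xz by (metis ext)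
    have upos: "0 < (\<Sum>j\<in>UNIV. real_of_int (x j - z j) * u j)"
    proof -
      have "real_of_int (x j0 - z j0) * u j0 \<le> (\<Sum>j\<in>UNIV. real_of_int (x j - z j) * u j)"
        by (rule member_le_sum) (auto simp: u_def)
      moreover have "0 < real_of_int (x j0 - z j0) * u j0"
      proof -
        have "real_of_int (x j0 - z j0) \<noteq> 0" using j0 by simp
        then show ?thesis unfolding u_def by (metis not_real_square_gt_zero)
      qed
      ultimately show ?thesis by linarith
    qed
    have "0 < \<mu>s x * (\<Sum>j\<in>UNIV. real_of_int (x j - z j) * u j)" using mpos upos by simp
    then obtain x2 where x2: "x2 \<in> P" "\<mu>s x2 * (\<Sum>j\<in>UNIV. real_of_int (x2 j - z j) * u j) < 0"
      using sum_zero_neg[OF finP key xP] by blast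
    have m2: "\<mu>s x2 > 0" and sneg: "(\<Sum>j\<in>UNIV. real_of_int (x2 j - z j) * u j) < 0"
      using x2(2) mnn[of x2] by (auto simp: mult_less_0_iff)
    obtain i where i: "real_of_int (x2 i - z i) * u i < 0" using sum_neg_ex[OF sneg] by blast
    have neg: "(x i - z i) * (x2 i - z i) < 0"
    proof -
      have "real_of_int ((x i - z i) * (x2 i - z i)) < 0" using i unfolding u_def by (simp add: mult.commute)
      then show ?thesis by (metis of_int_0 of_int_less_iff)
    qed
    obtain \<mu>' where "feas \<mu>'" "val \<mu>' < val \<mu>s" using move[OF fs xP x2(1) mpos m2 neg] by blast
    then show False using minimal by (meson leD)
  qed
  have sumz: "(\<Sum>x\<in>P. \<mu>s x * h x) = (if z \<in> P then \<mu>s z * h z else 0)" for h :: "('m \<Rightarrow> int) \<Rightarrow> real"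
  proof -
    have "(\<Sum>x\<in>P. \<mu>s x * h x) = (\<Sum>x\<in>P. if x = z then \<mu>s z * h z else 0)"
      by (rule sum.cong) (auto simp: supp_z)
    also have "\<dots> = (if z \<in> P then \<mu>s z * h z else 0)" using finP by (simp add: sum.delta)
    finally show ?thesis .
  qed
  have "(\<Sum>x\<in>P. \<mu>s x * 1) = 1" using sum1 by simp
  hence zP: "z \<in> P" and mz: "\<mu>s z = 1" using sumz[of "\<lambda>_. 1"] by (auto split: if_splits)
  have cs: "cost \<mu>s = fr z" unfolding cost_def using sumz[of fr] zP mz by simp
  have "val \<mu>s \<le> val \<mu>0" using minimal f0 by blast
  hence "cost \<mu>s \<le> cost \<mu>0" unfolding val_def by (auto simp: less_eq_prod_simp)
  then show ?thesis using fP[OF zP] cs by simp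
qed

end

theorem lemma19:
  fixes f :: "('m::finite \<Rightarrow> int) \<Rightarrow> ereal"
    and r :: "'m \<Rightarrow> int"
    and l :: nat
    and zs :: "nat \<Rightarrow> ('m \<Rightarrow> int)"
    and lam :: "nat \<Rightarrow> real"
    and z :: "'m \<Rightarrow> int"
  assumes "rat_or_inf f"
    and "SBO_jump_M_convex f"
    and "\<forall>k<l. \<forall>i. zs k i mod 2 = r i mod 2"
    and "\<forall>k<l. lam k \<ge> 0"
    and "(\<Sum>k<l. lam k) = 1"
    and "\<forall>i. real_of_int (z i) = (\<Sum>k<l. lam k * real_of_int (zs k i))"
    and "\<forall>i. z i mod 2 = r i mod 2"
  shows "f z \<le> (\<Sum>k<l. ereal (lam k) * f (zs k))"
proof -
  note rat = assms(1) and sbo = assms(2) and zspar = assms(3) and lamnn = assms(4)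
    and lamsum = assms(5) and zmean = assms(6) and zpar = assms(7)
  have ninf: "\<forall>x. f x \<noteq> -\<infinity>"
  proof
    fix x
    have "f x = \<infinity> \<or> (\<exists>q::rat. f x = ereal (of_rat q))" using rat unfolding rat_or_inf_def by blast
    then show "f x \<noteq> -\<infinity>" by auto
  qed
  define K where "K = {k. k < l \<and> 0 < lam k}"
  have finK: "finite K" unfolding K_def by simp
  have Kl: "K \<subseteq> {..<l}" unfolding K_def by auto
  have lam0: "lam k = 0" if "k < l" "k \<notin> K" for k
    using that lamnn unfolding K_def by force
  show ?thesis
  proof (cases "\<exists>k\<in>K. f (zs k) = \<infinity>")
    case True
    then obtain k where k: "k \<in> K" "f (zs k) = \<infinity>" by blast
    have "ereal (lam k) * f (zs k) = \<infinity>" using k unfolding K_def by simp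
    moreover have "k \<in> {..<l}" using k Kl by blast
    ultimately have "(\<Sum>k<l. ereal (lam k) * f (zs k)) = \<infinity>"
      using sum_Pinfty[of "\<lambda>k. ereal (lam k) * f (zs k)" "{..<l}"] by blast
    then show ?thesis by simp
  next
    case False
    define lo where "lo i = Min ((\<lambda>k. zs k i) ` K)" for i
    define hi where "hi i = Max ((\<lambda>k. zs k i) ` K)" for i
    interpret L: lpset f r z lo hi
      using sbo ninf zpar by unfold_locales auto
    define \<mu>0 where "\<mu>0 x = (\<Sum>k\<in>{k\<in>K. zs k = x}. lam k)" for x
    have zsP: "zs ` K \<subseteq> L.P"
    proof
      fix x assume "x \<in> zs ` K"
      then obtain k where k: "k \<in> K" "x = zs k" by blast
      have "lo i \<le> zs k i" for i unfolding lo_def using finK k by (intro Min_le) auto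
      moreover have "zs k i \<le> hi i" for i unfolding hi_def using finK k by (intro Max_ge) auto
      moreover have "\<forall>i. zs k i mod 2 = r i mod 2" using zspar k unfolding K_def by blast
      moreover have "f (zs k) \<noteq> \<infinity>" using False k by blast
      ultimately show "x \<in> L.P" using k unfolding L.P_def by blast
    qed
    have conv: "(\<Sum>x\<in>L.P. \<mu>0 x * h x) = (\<Sum>k<l. lam k * h (zs k))" for h
    proof -
      have "(\<Sum>x\<in>L.P. \<mu>0 x * h x) = (\<Sum>x\<in>L.P. \<Sum>k\<in>{k\<in>K. zs k = x}. lam k * h (zs k))"
        unfolding \<mu>0_def by (rule sum.cong) (auto simp: sum_distrib_right)
      also have "\<dots> = (\<Sum>k\<in>K. lam k * h (zs k))"
        by (rule sum.group[OF finK L.finP zsP])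
      also have "\<dots> = (\<Sum>k<l. lam k * h (zs k))"
        by (rule sum.mono_neutral_left) (use Kl lam0 in auto)
      finally show ?thesis .
    qed
    have fe: "L.feas \<mu>0"
      unfolding L.feas_def
    proof (intro conjI allI impI)
      fix x show "0 \<le> \<mu>0 x" unfolding \<mu>0_def using K_def by (intro sum_nonneg) auto
    next
      fix x assume "\<mu>0 x \<noteq> 0"
      then have "{k\<in>K. zs k = x} \<noteq> {}" unfolding \<mu>0_def by (metis sum.empty)
      then show "x \<in> L.P" using zsP by blast
    next
      have "(\<Sum>x\<in>L.P. \<mu>0 x * 1) = (\<Sum>k<l. lam k * 1)" by (rule conv)
      then show "(\<Sum>x\<in>L.P. \<mu>0 x) = 1" using lamsum by simp
    next
      fix i
      have "(\<Sum>x\<in>L.P. \<mu>0 x * real_of_int (x i)) = (\<Sum>k<l. lam k * real_of_int (zs k i))" by (rule conv)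
      then show "(\<Sum>x\<in>L.P. \<mu>0 x * real_of_int (x i)) = real_of_int (z i)" using zmean by simp
    qed
    have "f z \<le> ereal (L.cost \<mu>0)" by (rule L.final[OF fe])
    also have "L.cost \<mu>0 = (\<Sum>k<l. lam k * L.fr (zs k))" unfolding L.cost_def by (rule conv)
    also have "ereal (\<Sum>k<l. lam k * L.fr (zs k)) = (\<Sum>k<l. ereal (lam k) * f (zs k))"
    proof -
      have "ereal (\<Sum>k<l. lam k * L.fr (zs k)) = (\<Sum>k<l. ereal (lam k * L.fr (zs k)))"
        by (simp add: sum_ereal)
      also have "\<dots> = (\<Sum>k<l. ereal (lam k) * f (zs k))"
      proof (rule sum.cong)
        fix k assume "k \<in> {..<l}"
        show "ereal (lam k * L.fr (zs k)) = ereal (lam k) * f (zs k)"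
        proof (cases "k \<in> K")
          case True
          have "f (zs k) = ereal (L.fr (zs k))" using zsP True by (intro L.fP) auto
          then show ?thesis by simp
        next
          case False
          then have "lam k = 0" using lam0 \<open>k \<in> {..<l}\<close> by auto
          moreover have "ereal 0 = 0" by (rule zero_ereal_def[symmetric])
          ultimately show ?thesis by (metis ereal_zero_mult mult_zero_left)
        qed
      qed simp
      finally show ?thesis .
    qed
    finally show ?thesis .
  qed
qed


end
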